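(* Let $q\ge 1$ and $t\ge 0$ be integers. A code $\mathcal{C}\subseteq\mathcal{S}_{\mathrm{all}}^q$ is a $t$-tail-deletion-detecting code if and only if it is a $t$-tail-insertion-detecting code. Moreover, for every integer $q\ge 3$ and every integer $t\ge 1$ there exists a code $\mathcal{C}\subseteq\mathcal{S}_{\mathrm{all}}^q$ that is a $t$-tail-deletion-detecting code but is not a $2$-tail-indel-detecting code.
   Context: Let $[q]=\{0,1,\dots,q-1\}$. For $1\le m\le q$, a partial permutation of length $m$ over $[q]$ is a sequence $\pi=(\pi_1,\dots,\pi_m)$ of $m$ pairwise distinct elements of $[q]$; write $|\pi|=m$. Let $\mathcal{S}_m^q$ be the set of all partial permutations of length $m$ and $\mathcal{S}_{\mathrm{all}}^q=\bigcup_{m=1}^{q}\mathcal{S}_m^q$. A code is any subset of $\mathcal{S}_{\mathrm{all}}^q$. Juxtaposition $\omega\pi$ denotes concatenation with $\omega$ on the left. Tail deletions: for $\pi$ of length $m$ and an integer $j\ge 0$, let $\pi_{\downarrow j}=(\pi_{k+1},\dots,\pi_m)$ with $k=\min(j,m-1)$ (leftmost symbols are deleted; the last symbol is never deleted). For an integer $t\ge 0$, $\mathcal{B}_{\mathrm{del}}^t(\pi)=\{\pi_{\downarrow j}:0\le j\le t\}$. Tail insertions: $\mathcal{B}_{\mathrm{ins}}^t(\pi)$ is the set of all $\omega\pi\in\mathcal{S}_{\mathrm{all}}^q$ where $\omega$ is a (possibly empty) sequence of at most $t$ elements of $[q]$ (so all entries of $\omega\pi$ are pairwise distinct). Tail indels: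 $\mathcal{B}_{\mathrm{indel}}^t(\pi)$ is the set of all partial permutations obtainable from $\pi$ by a sequence of at most $t$ operations, each being either a single tail deletion (removing the first symbol of a partial permutation of length at least $2$) or a single tail insertion (prepending an element of $[q]$ not already occurring). For $X\in\{\mathrm{del},\mathrm{ins},\mathrm{indel}\}$, a code $\mathcal{C}$ is $t$-tail-$X$-detecting (i.e. $t$-tail-deletion-, insertion-, indel-detecting) if $\mathcal{C}\cap\mathcal{B}_X^t(\pi)=\{\pi\}$ for every $\pi\in\mathcal{C}$. *)

theory Defs
  imports Main
begin

text \<open>Partial permutations over [q] = {0..<q} are represented as lists of naturals:
  nonempty, distinct, all entries below q (length \<le> q follows).
  The first list element is the leftmost symbol \<pi>_1.\<close>

definition ppall :: "nat \<Rightarrow> nat list set" where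
  "ppall q = {xs. xs \<noteq> [] \<and> distinct xs \<and> set xs \<subseteq> {..<q}}"

definition tail_del :: "nat \<Rightarrow> nat list \<Rightarrow> nat list" where
  "tail_del j xs = drop (min j (length xs - 1)) xs"

definition ball_del :: "nat \<Rightarrow> nat list \<Rightarrow> nat list set" where
  "ball_del t xs = {tail_del j xs | j. j \<le> t}"

definition ball_ins :: "nat \<Rightarrow> nat \<Rightarrow> nat list \<Rightarrow> nat list set" where
  "ball_ins q t xs = {w @ xs | w. length w \<le> t \<and> set w \<subseteq> {..<q} \<and> w @ xs \<in> ppall q}"

definition indel_step :: "nat \<Rightarrow> nat list \<Rightarrow> nat list \<Rightarrow> bool" where
  "indel_step q xs ys \<longleftrightarrow>
     (length xs \<ge> 2 \<and> ys = tl xs) \<or> (\<exists>a. a < q \<and> a \<notin> set xs \<and> ys = a # xs)"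

definition ball_indel :: "nat \<Rightarrow> nat \<Rightarrow> nat list \<Rightarrow> nat list set" where
  "ball_indel q t xs = {ys. \<exists>k\<le>t. (indel_step q ^^ k) xs ys}"

definition del_detecting :: "nat \<Rightarrow> nat list set \<Rightarrow> bool" where
  "del_detecting t C \<longleftrightarrow> (\<forall>p\<in>C. C \<inter> ball_del t p = {p})"

definition ins_detecting :: "nat \<Rightarrow> nat \<Rightarrow> nat list set \<Rightarrow> bool" where
  "ins_detecting q t C \<longleftrightarrow> (\<forall>p\<in>C. C \<inter> ball_ins q t p = {p})"

definition indel_detecting :: "nat \<Rightarrow> nat \<Rightarrow> nat list set \<Rightarrow> bool" where
  "indel_detecting q t C \<longleftrightarrow> (\<forall>p\<in>C. C \<inter> ball_indel q t p = {p})"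

end

theory Submission
  imports Defs
begin

lemma del_char:
  assumes "C \<subseteq> ppall q"
  shows "del_detecting t C \<longleftrightarrow> (\<forall>p\<in>C. \<forall>p'\<in>C. \<forall>w. p = w @ p' \<and> length w \<le> t \<longrightarrow> w = [])"
proof
  assume D: "del_detecting t C"
  show "\<forall>p\<in>C. \<forall>p'\<in>C. \<forall>w. p = w @ p' \<and> length w \<le> t \<longrightarrow> w = []"
  proof (intro ballI allI impI)
    fix p p' w assume p: "p \<in> C" and p': "p' \<in> C" and h: "p = w @ p' \<and> length w \<le> t"
    have ne: "p' \<noteq> []" using p' assms by (auto simp: ppall_def)
    have "tail_del (length w) p = p'" using h ne
      by (cases p') (auto simp: tail_del_def min_def)
    hence "p' \<in> ball_del t p" using h unfolding ball_del_def by blast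
    hence "p' = p" using D p p' unfolding del_detecting_def by blast
    thus "w = []" using h by simp
  qed
next
  assume R: "\<forall>p\<in>C. \<forall>p'\<in>C. \<forall>w. p = w @ p' \<and> length w \<le> t \<longrightarrow> w = []"
  show "del_detecting t C" unfolding del_detecting_def
  proof (intro ballI equalityI subsetI)
    fix p x assume p: "p \<in> C" and x: "x \<in> C \<inter> ball_del t p"
    then obtain j where j: "j \<le> t" "x = tail_del j p" by (auto simp: ball_del_def)
    let ?k = "min j (length p - 1)"
    have "p = take ?k p @ x" "length (take ?k p) \<le> t" using j by (auto simp: tail_del_def)
    hence "take ?k p = []" using R p x by blast
    thus "x \<in> {p}" using \<open>p = take ?k p @ x\<close> by (metis append.left_neutral singletonI)
  next
    fix p x assume p: "p \<in> C" and x: "x \<in> {p}"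
    have "tail_del 0 p = p" by (simp add: tail_del_def)
    thus "x \<in> C \<inter> ball_del t p" using p x unfolding ball_del_def by force
  qed
qed

lemma ins_char:
  assumes "C \<subseteq> ppall q"
  shows "ins_detecting q t C \<longleftrightarrow> (\<forall>p\<in>C. \<forall>p'\<in>C. \<forall>w. p' = w @ p \<and> length w \<le> t \<longrightarrow> w = [])"
proof
  assume D: "ins_detecting q t C"
  show "\<forall>p\<in>C. \<forall>p'\<in>C. \<forall>w. p' = w @ p \<and> length w \<le> t \<longrightarrow> w = []"
  proof (intro ballI allI impI)
    fix p p' w assume p: "p \<in> C" and p': "p' \<in> C" and h: "p' = w @ p \<and> length w \<le> t"
    have "p' \<in> ppall q" using p' assms by auto
    hence "set w \<subseteq> {..<q}" using h by (auto simp: ppall_def)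
    hence "p' \<in> ball_ins q t p" using h \<open>p' \<in> ppall q\<close> unfolding ball_ins_def by blast
    hence "p' = p" using D p p' unfolding ins_detecting_def by blast
    thus "w = []" using h by simp
  qed
next
  assume R: "\<forall>p\<in>C. \<forall>p'\<in>C. \<forall>w. p' = w @ p \<and> length w \<le> t \<longrightarrow> w = []"
  show "ins_detecting q t C" unfolding ins_detecting_def
  proof (intro ballI equalityI subsetI)
    fix p x assume p: "p \<in> C" and x: "x \<in> C \<inter> ball_ins q t p"
    then obtain w where w: "length w \<le> t" "x = w @ p" by (auto simp: ball_ins_def)
    hence "w = []" using R p x by blast
    thus "x \<in> {p}" using w by simp
  next
    fix p x assume p: "p \<in> C" and x: "x \<in> {p}"
    have "p \<in> ppall q" using p assms by auto
    hence "[] @ p \<in> ball_ins q t p" unfolding ball_ins_def by force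
    thus "x \<in> C \<inter> ball_ins q t p" using p x by simp
  qed
qed

theorem mainTheorem1:
  shows "(\<forall>q t C. q \<ge> 1 \<longrightarrow> C \<subseteq> ppall q \<longrightarrow>
            (del_detecting t C \<longleftrightarrow> ins_detecting q t C))
       \<and> (\<forall>q t. q \<ge> 3 \<longrightarrow> t \<ge> 1 \<longrightarrow>
            (\<exists>C. C \<subseteq> ppall q \<and> del_detecting t C \<and> \<not> indel_detecting q 2 C))"
proof (intro conjI allI impI)
  fix q t and C :: "nat list set"
  assume "C \<subseteq> ppall q"
  thus "del_detecting t C \<longleftrightarrow> ins_detecting q t C"
    using del_char[of C q t] ins_char[of C q t] by blast
next
  fix q t :: nat assume q: "q \<ge> 3" and t: "t \<ge> 1"
  let ?C = "{[0,1],[2,1]} :: nat list set"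
  have sub: "?C \<subseteq> ppall q" using q by (auto simp: ppall_def)
  have "del_detecting t ?C"
  proof -
    have "\<forall>p\<in>?C. \<forall>p'\<in>?C. \<forall>w. p = w @ p' \<and> length w \<le> t \<longrightarrow> w = []"
    proof (intro ballI allI impI)
      fix p p' w assume "p \<in> ?C" "p' \<in> ?C" "p = w @ p' \<and> length w \<le> t"
      hence "length p = length w + length p'" "length p = 2" "length p' = 2" by auto
      thus "w = []" by simp
    qed
    thus ?thesis using del_char[OF sub] by blast
  qed
  moreover have "\<not> indel_detecting q 2 ?C"
  proof
    assume D: "indel_detecting q 2 ?C"
    have s1: "indel_step q [0,1] [1]" by (simp add: indel_step_def)
    have s2: "indel_step q [1] [2,1]" using q by (simp add: indel_step_def)
    have "(indel_step q ^^ 2) [0,1] [2,1]" using s1 s2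
      by (auto simp: numeral_2_eq_2 relcompp.simps)
    hence "[2,1] \<in> ball_indel q 2 [0,1]" unfolding ball_indel_def by blast
    hence "[2,1] \<in> ?C \<inter> ball_indel q 2 [0,1]" by simp
    hence "[2,1] \<in> {[0,1::nat]}" using D unfolding indel_detecting_def by (metis insertI1)
    thus False by simp
  qed
  ultimately show "\<exists>C. C \<subseteq> ppall q \<and> del_detecting t C \<and> \<not> indel_detecting q 2 C"
    using sub by blast
qed

end
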